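(* Let $\delta\in[0,1)$. For every $R>0$ for which $\omega_{\delta,R}$ exists, $\max_{[-R,R]}\omega_{\delta,R}<1-\delta$. Furthermore, if $\delta>0$, there exists $R_\delta\ge R^\omega_\delta$ such that for all $R\ge R_\delta$: $\max_{[-R,R]}\omega_{\delta,R}\ge 1-2\delta$, and there exists a unique $x_{\delta,R}\in(-R,R)$ such that $\omega_{\delta,R}$ is increasing on $[-R,x_{\delta,R}]$, decreasing on $[x_{\delta,R},R]$, and maximal at $x_{\delta,R}$.
   Context: Fixed parameters: $d>0$, $r>0$. For $\delta\in[0,1)$ and $R>0$, consider the boundary value problem $-d\omega''-\big(2\sqrt{r(1-\delta)d}-\delta\big)\omega'=r\omega(1-\delta-\omega)$ on $(-R,R)$, $\omega(\pm R)=0$. It is known that it admits a nonnegative nonzero solution, which is then unique, if and only if $R$ is at least a threshold $R^\omega_\delta>0$; this solution is denoted $\omega_{\delta,R}$. *)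

theory Defs
  imports "HOL-Analysis.Analysis"
begin

definition bvp_solution :: "real \<Rightarrow> real \<Rightarrow> real \<Rightarrow> real \<Rightarrow> (real \<Rightarrow> real) \<Rightarrow> bool" where
  "bvp_solution d r \<delta> R w \<longleftrightarrow>
     continuous_on {-R..R} w \<and> w (-R) = 0 \<and> w R = 0 \<and>
     (\<exists>w' w''. \<forall>x\<in>{-R<..<R}.
        (w has_real_derivative w' x) (at x) \<and>
        (w' has_real_derivative w'' x) (at x) \<and>
        - d * w'' x - (2 * sqrt (r * (1 - \<delta>) * d) - \<delta>) * w' x
          = r * w x * (1 - \<delta> - w x))"

text \<open>Nonnegative nonzero solution (this is omega_{delta,R}, which is unique when it exists).\<close>
definition omega_sol :: "real \<Rightarrow> real \<Rightarrow> real \<Rightarrow> real \<Rightarrow> (real \<Rightarrow> real) \<Rightarrow> bool" where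
  "omega_sol d r \<delta> R w \<longleftrightarrow> bvp_solution d r \<delta> R w \<and>
     (\<forall>x\<in>{-R..R}. 0 \<le> w x) \<and> (\<exists>x\<in>{-R..R}. w x \<noteq> 0)"

definition omega_threshold :: "real \<Rightarrow> real \<Rightarrow> real \<Rightarrow> real" where
  "omega_threshold d r \<delta> = Inf {R. 0 < R \<and> (\<exists>w. omega_sol d r \<delta> R w)}"

end

theory Submission
  imports Defs
begin

lemma energy_bound:
  fixes u u' u'' p s K :: real
  assumes "u'' = p * u' + s * u" "\<bar>p\<bar> \<le> K" "\<bar>s\<bar> \<le> K"
  shows "\<bar>2*u*u' + 2*u'*u''\<bar> \<le> (1 + 3*K) * (u^2 + u'^2)"
proof -
  have K0: "0 \<le> K" using assms(2) by linarith
  have a: "\<bar>2*u*u'\<bar> \<le> u^2 + u'^2"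
    by (smt (verit, ccfv_SIG) abs_le_iff sum_squares_bound power2_eq_square mult.commute sum_power2_ge_zero
         power2_diff power2_sum zero_le_power2)
  have b: "\<bar>2*u'*u''\<bar> \<le> 2*K*u'^2 + K*\<bar>2*u*u'\<bar>"
  proof -
    have "\<bar>2*u'*u''\<bar> = \<bar>2*p*u'^2 + s*(2*u*u')\<bar>" by (simp add: assms(1) algebra_simps power2_eq_square)
    also have "\<dots> \<le> \<bar>2*p*u'^2\<bar> + \<bar>s*(2*u*u')\<bar>" by (rule abs_triangle_ineq)
    also have "\<bar>2*p*u'^2\<bar> \<le> 2*K*u'^2" using assms(2) by (simp add: abs_mult mult_right_mono)
    also have "\<bar>s*(2*u*u')\<bar> \<le> K*\<bar>2*u*u'\<bar>" using assms(3) by (simp add: abs_mult mult_right_mono)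
    finally show ?thesis by simp
  qed
  have c: "K*\<bar>2*u*u'\<bar> \<le> K*(u^2+u'^2)" using a K0 by (simp add: mult_left_mono)
  have "\<bar>2*u*u' + 2*u'*u''\<bar> \<le> \<bar>2*u*u'\<bar> + \<bar>2*u'*u''\<bar>" by (rule abs_triangle_ineq)
  also have "\<dots> \<le> (u^2+u'^2) + 2*K*u'^2 + K*(u^2+u'^2)" using a b c by linarith
  also have "\<dots> \<le> (1+3*K)*(u^2+u'^2)" using K0 by (simp add: algebra_simps)
  finally show ?thesis .
qed

lemma zero_unique:
  fixes u u' u'' p s :: "real \<Rightarrow> real" and K \<alpha> \<beta> x0 :: real
  assumes "\<alpha> < x0" "x0 < \<beta>"
  and d1: "\<forall>x\<in>{\<alpha><..<\<beta>}. (u has_real_derivative u' x) (at x)"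
  and d2: "\<forall>x\<in>{\<alpha><..<\<beta>}. (u' has_real_derivative u'' x) (at x)"
  and eq: "\<forall>x\<in>{\<alpha><..<\<beta>}. u'' x = p x * u' x + s x * u x"
  and bd: "\<forall>x\<in>{\<alpha><..<\<beta>}. \<bar>p x\<bar> \<le> K \<and> \<bar>s x\<bar> \<le> K"
  and z: "u x0 = 0" "u' x0 = 0"
  shows "\<forall>x\<in>{\<alpha><..<\<beta>}. u x = 0"
proof
  fix x assume x: "x \<in> {\<alpha><..<\<beta>}"
  define L where "L = 1 + 3*K"
  define E where "E t = (u t)^2 + (u' t)^2" for t
  have dE: "(E has_real_derivative (2*u t*u' t + 2*u' t*u'' t)) (at t)" if "t \<in> {\<alpha><..<\<beta>}" for t
    unfolding E_def using d1 d2 that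
    by (auto intro!: derivative_eq_intros simp: algebra_simps)
  have bE: "\<bar>2*u t*u' t + 2*u' t*u'' t\<bar> \<le> L * E t" if "t \<in> {\<alpha><..<\<beta>}" for t
    unfolding L_def E_def using energy_bound[of "u'' t" "p t" "u' t" "s t" "u t" K] eq bd that by auto
  have E0: "E x0 = 0" using z by (simp add: E_def)
  have Enn: "0 \<le> E t" for t by (simp add: E_def)
  have "E x \<le> 0"
  proof (cases "x0 \<le> x")
    case True
    define g where "g t = E t * exp (-L*t)" for t
    have "g x \<le> g x0"
    proof (rule DERIV_nonpos_imp_nonincreasing[OF True])
      fix t assume t: "x0 \<le> t" "t \<le> x"
      hence tI: "t \<in> {\<alpha><..<\<beta>}" using x assms(1) by auto
      have "(g has_real_derivative ((2*u t*u' t + 2*u' t*u'' t) * exp (-L*t) + E t * (exp (-L*t) * (-L)))) (at t)"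
        unfolding g_def by (auto intro!: derivative_eq_intros dE[OF tI])
      moreover have "(2*u t*u' t + 2*u' t*u'' t) * exp (-L*t) + E t * (exp (-L*t) * (-L)) \<le> 0"
      proof -
        have "(2*u t*u' t + 2*u' t*u'' t) - L * E t \<le> 0" using bE[OF tI] by linarith
        hence "((2*u t*u' t + 2*u' t*u'' t) - L * E t) * exp (-L*t) \<le> 0"
          by (simp add: mult_nonpos_nonneg)
        thus ?thesis by (simp add: algebra_simps)
      qed
      ultimately show "\<exists>y. (g has_real_derivative y) (at t) \<and> y \<le> 0" by blast
    qed
    hence "E x * exp (-L*x) \<le> 0" using E0 by (simp add: g_def)
    thus ?thesis by (simp add: mult_le_0_iff)
  next
    case False
    hence le: "x \<le> x0" by simp
    define g where "g t = E t * exp (L*t)" for t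
    have "g x \<le> g x0"
    proof (rule DERIV_nonneg_imp_nondecreasing[OF le])
      fix t assume t: "x \<le> t" "t \<le> x0"
      hence tI: "t \<in> {\<alpha><..<\<beta>}" using x assms(2) by auto
      have "(g has_real_derivative ((2*u t*u' t + 2*u' t*u'' t) * exp (L*t) + E t * (exp (L*t) * L))) (at t)"
        unfolding g_def by (auto intro!: derivative_eq_intros dE[OF tI])
      moreover have "0 \<le> (2*u t*u' t + 2*u' t*u'' t) * exp (L*t) + E t * (exp (L*t) * L)"
      proof -
        have "0 \<le> (2*u t*u' t + 2*u' t*u'' t) + L * E t" using bE[OF tI] by linarith
        hence "0 \<le> ((2*u t*u' t + 2*u' t*u'' t) + L * E t) * exp (L*t)"
          by simp
        thus ?thesis by (simp add: algebra_simps)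
      qed
      ultimately show "\<exists>y. (g has_real_derivative y) (at t) \<and> 0 \<le> y" by blast
    qed
    hence "E x * exp (L*x) \<le> 0" using E0 by (simp add: g_def)
    thus ?thesis by (simp add: mult_le_0_iff)
  qed
  hence "E x = 0" using Enn[of x] by linarith
  thus "u x = 0" unfolding E_def by (simp add: add_nonneg_eq_0_iff)
qed


lemma quad_ineq:
  fixes A B C y Z :: real
  assumes A: "0 < A" and C: "0 < C" and D: "B^2 < A*C"
  shows "(A*C - B^2)/(A+C) * (y^2 + Z^2) \<le> A*y^2 + 2*B*y*Z + C*Z^2"
proof -
  define l where "l = (A*C - B^2)/(A+C)"
  have l0: "0 < l" using A C D by (simp add: l_def)
  have lA: "l < A" unfolding l_def using A C D
    by (simp add: divide_less_eq algebra_simps) (smt (verit) mult_pos_pos zero_le_power2)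
  have key: "(A - l)*(C - l) - B^2 = l^2"
  proof -
    have "l*(A+C) = A*C - B^2" unfolding l_def using A C by simp
    thus ?thesis by (simp add: algebra_simps power2_eq_square)
  qed
  have "(A - l) * ((A - l)*y^2 + 2*B*y*Z + (C - l)*Z^2) = ((A-l)*y + B*Z)^2 + ((A - l)*(C - l) - B^2)*Z^2"
    by (simp add: algebra_simps power2_eq_square)
  also have "\<dots> \<ge> 0" unfolding key by simp
  finally have "0 \<le> (A - l)*y^2 + 2*B*y*Z + (C - l)*Z^2" using lA
    by (simp add: zero_le_mult_iff)
  thus ?thesis unfolding l_def[symmetric] by (simp add: algebra_simps)
qed

lemma rate_ineq:
  fixes d r \<delta> c W u y z :: real
  assumes d: "0 < d" and r: "0 < r" and \<delta>: "0 < \<delta>" "\<delta> < 1" and cc: "c^2 < 4*d*r*(1-\<delta>)"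
    and W: "0 < W" and u: "\<delta> \<le> u" "u \<le> 1" and eq: "-d*z - c*y = r*W*u"
  shows "(z*u*W - y^2*(1-\<delta>)) / (W^2 + y^2*u^2) \<le> - ((d*(1-\<delta>)*r - (c/2)^2)/(d*(1-\<delta>)+r) * \<delta>^2 / d)"
proof -
  define l where "l = (d*(1-\<delta>)*r - (c/2)^2)/(d*(1-\<delta>)+r)"
  define Z where "Z = u*W"
  have A: "0 < d*(1-\<delta>)" using d \<delta> by simp
  have BB: "(c/2)^2 < d*(1-\<delta>)*r" using cc by (simp add: power_divide algebra_simps)
  have q: "l * (y^2 + Z^2) \<le> d*(1-\<delta>)*y^2 + 2*(c/2)*y*Z + r*Z^2"
    unfolding l_def by (rule quad_ineq[OF A r BB])
  have l0: "0 \<le> l" unfolding l_def using A r BB by simp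
  have num: "d*(z*u*W - y^2*(1-\<delta>)) = -(d*(1-\<delta>)*y^2 + 2*(c/2)*y*Z + r*Z^2)"
  proof -
    have dz: "d*z = -c*y - r*W*u" using eq by linarith
    have "d*(z*u*W - y^2*(1-\<delta>)) = (d*z)*u*W - d*y^2*(1-\<delta>)" by (simp add: algebra_simps)
    also have "\<dots> = (-c*y - r*W*u)*u*W - d*y^2*(1-\<delta>)" by (simp only: dz)
    finally show ?thesis by (simp add: Z_def algebra_simps power2_eq_square)
  qed
  have ZW: "\<delta>^2 * W^2 \<le> Z^2"
  proof -
    have "\<delta> * W \<le> Z" unfolding Z_def using u W by (simp add: mult_right_mono)
    moreover have "0 \<le> \<delta> * W" using \<delta> W by simp
    ultimately have "(\<delta>*W)^2 \<le> Z^2" by (rule power_mono)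
    thus ?thesis by (simp add: power_mult_distrib)
  qed
  have Yu: "\<delta>^2 * (y^2*u^2) \<le> y^2"
  proof -
    have "u^2 \<le> 1" using u \<delta> by (intro power_le_one) auto
    moreover have "\<delta>^2 \<le> 1" using \<delta> by (intro power_le_one) auto
    ultimately have "\<delta>^2 * u^2 \<le> 1" by (intro mult_le_one) auto
    hence "y^2 * (\<delta>^2 * u^2) \<le> y^2 * 1" by (intro mult_left_mono) auto
    thus ?thesis by (simp add: algebra_simps)
  qed
  have den: "0 < W^2 + y^2*u^2" using W by (simp add: add_pos_nonneg)
  have "\<delta>^2 * (W^2 + y^2*u^2) \<le> y^2 + Z^2" using ZW Yu by (simp add: algebra_simps)
  hence "l * (\<delta>^2 * (W^2 + y^2*u^2)) \<le> l * (y^2 + Z^2)" using l0 by (intro mult_left_mono)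
  also have "\<dots> \<le> - (d*(z*u*W - y^2*(1-\<delta>)))" using q num by linarith
  finally have "(z*u*W - y^2*(1-\<delta>)) \<le> - (l * \<delta>^2 / d) * (W^2 + y^2*u^2)"
    using d by (simp add: field_simps)
  hence "(z*u*W - y^2*(1-\<delta>)) / (W^2 + y^2*u^2) \<le> - (l * \<delta>^2 / d)"
    using den by (simp add: divide_le_eq)
  thus ?thesis unfolding l_def .
qed

lemma alg_deriv:
  fixes W U Y Z :: real assumes W: "0 < W"
  shows "inverse (1 + (Y*U/W)^2) * ((Z*U - Y*Y)*W - Y*U*Y) / (W*W) = (Z*U*W - Y^2*(U+W))/(W^2 + Y^2*U^2)"
proof -
  have p: "0 < W^2 + Y^2*U^2" using W by (simp add: add_pos_nonneg)
  have "1 + (Y*U/W)^2 = (W^2 + Y^2*U^2)/W^2" using W by (simp add: field_simps power2_eq_square)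
  hence i: "inverse (1 + (Y*U/W)^2) = W^2/(W^2 + Y^2*U^2)" by simp
  have n: "(Z*U - Y*Y)*W - Y*U*Y = Z*U*W - Y^2*(U+W)" by (simp add: algebra_simps power2_eq_square)
  have "W^2/(W^2 + Y^2*U^2) * (Z*U*W - Y^2*(U+W)) / (W*W) = (Z*U*W - Y^2*(U+W))/(W^2 + Y^2*U^2)"
    using W by (simp add: power2_eq_square)
  thus ?thesis unfolding i n .
qed

locale sol =
  fixes d r \<delta> R c :: real and w w' w'' :: "real \<Rightarrow> real"
  assumes d: "0 < d" and r: "0 < r" and \<delta>0: "0 \<le> \<delta>" and \<delta>1: "\<delta> < 1" and R: "0 < R"
  and cont: "continuous_on {-R..R} w" and wl: "w (-R) = 0" and wr: "w R = 0"
  and D1: "\<And>x. x \<in> {-R<..<R} \<Longrightarrow> (w has_real_derivative w' x) (at x)"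
  and D2: "\<And>x. x \<in> {-R<..<R} \<Longrightarrow> (w' has_real_derivative w'' x) (at x)"
  and ode: "\<And>x. x \<in> {-R<..<R} \<Longrightarrow> - d * w'' x - c * w' x = r * w x * (1 - \<delta> - w x)"
  and nn: "\<And>x. x \<in> {-R..R} \<Longrightarrow> 0 \<le> w x" and nz: "\<exists>x\<in>{-R..R}. w x \<noteq> 0"
begin

lemma w2: "x \<in> {-R<..<R} \<Longrightarrow> w'' x = (-c/d) * w' x + (-r*(1-\<delta>-w x)/d) * w x"
  using ode[of x] d by (simp add: field_simps)

lemma bounded_w: obtains B where "0 \<le> B" "\<And>x. x \<in> {-R..R} \<Longrightarrow> \<bar>w x\<bar> \<le> B"
proof -
  have "bounded (w ` {-R..R})" by (rule compact_imp_bounded[OF compact_continuous_image[OF cont compact_Icc]])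
  then obtain B where "0 < B" "\<And>y. y \<in> w ` {-R..R} \<Longrightarrow> norm y \<le> B" by (auto simp: bounded_pos)
  thus ?thesis using that[of B] by auto
qed

lemma incr:
  assumes "-R \<le> a" "a < b" "b \<le> R" "\<And>x. x \<in> {a<..<b} \<Longrightarrow> 0 < w' x"
  shows "w a < w b"
proof -
  have "continuous_on {a..b} w" using cont by (rule continuous_on_subset) (use assms in auto)
  moreover have "\<And>x. a < x \<Longrightarrow> x < b \<Longrightarrow> w differentiable at x"
    using D1 assms by (meson greaterThanLessThan_iff less_le_trans le_less_trans real_differentiable_def)
  ultimately obtain l z where z: "a < z" "z < b" "(w has_real_derivative l) (at z)" "w b - w a = (b - a) * l"
    using MVT[OF assms(2)] by blast
  have "l = w' z" using DERIV_unique[OF z(3) D1[of z]] z assms by auto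
  hence "0 < (b - a) * l" using z assms(2) assms(4)[of z] by (simp add: mult_pos_pos)
  thus ?thesis using z(4) by linarith
qed

lemma decr:
  assumes "-R \<le> a" "a < b" "b \<le> R" "\<And>x. x \<in> {a<..<b} \<Longrightarrow> w' x < 0"
  shows "w b < w a"
proof -
  have "continuous_on {a..b} w" using cont by (rule continuous_on_subset) (use assms in auto)
  moreover have "\<And>x. a < x \<Longrightarrow> x < b \<Longrightarrow> w differentiable at x"
    using D1 assms by (meson greaterThanLessThan_iff less_le_trans le_less_trans real_differentiable_def)
  ultimately obtain l z where z: "a < z" "z < b" "(w has_real_derivative l) (at z)" "w b - w a = (b - a) * l"
    using MVT[OF assms(2)] by blast
  have "l = w' z" using DERIV_unique[OF z(3) D1[of z]] z assms by auto
  hence "(b - a) * l < 0" using z assms(2) assms(4)[of z] by (simp add: mult_pos_neg)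
  thus ?thesis using z(4) by linarith
qed

lemma crit_max:
  assumes y: "y \<in> {-R<..<R}" and "w' y = 0" and "w'' y < 0"
  shows "\<exists>h>0. \<forall>t. 0 < t \<and> t < h \<longrightarrow> w (y+t) < w y \<and> w (y-t) < w y"
proof -
  obtain h1 where h1: "h1 > 0" "\<And>h. 0 < h \<Longrightarrow> h < h1 \<Longrightarrow> w' (y+h) < w' y"
    using DERIV_neg_dec_right[OF D2[OF y] assms(3)] by blast
  obtain h2 where h2: "h2 > 0" "\<And>h. 0 < h \<Longrightarrow> h < h2 \<Longrightarrow> w' y < w' (y-h)"
    using DERIV_neg_dec_left[OF D2[OF y] assms(3)] by blast
  define h where "h = min (min h1 h2) (min (R - y) (y + R))"
  have hp: "h > 0" using h1 h2 y by (auto simp: h_def)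
  show ?thesis
  proof (intro exI[of _ h] conjI allI impI hp)
    fix t assume t: "0 < t \<and> t < h"
    show "w (y+t) < w y"
    proof (rule decr)
      fix x assume x: "x \<in> {y<..<y+t}"
      show "w' x < 0" using h1(2)[of "x - y"] x t assms(2) by (auto simp: h_def)
    qed (use t y in \<open>auto simp: h_def\<close>)
    show "w (y-t) < w y"
    proof (rule incr)
      fix x assume x: "x \<in> {y-t<..<y}"
      show "0 < w' x" using h2(2)[of "y - x"] x t assms(2) by (auto simp: h_def)
    qed (use t y in \<open>auto simp: h_def\<close>)
  qed
qed

lemma max_second:
  assumes y: "y \<in> {-R<..<R}" and "w' y = 0" and mx: "\<And>x. x \<in> {-R..R} \<Longrightarrow> w x \<le> w y"
  shows "w'' y \<le> 0"
proof (rule ccontr)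
  assume "\<not> w'' y \<le> 0"
  hence "0 < w'' y" by simp
  then obtain h1 where h1: "h1 > 0" "\<And>h. 0 < h \<Longrightarrow> h < h1 \<Longrightarrow> w' y < w' (y+h)"
    using DERIV_pos_inc_right[OF D2[OF y]] by blast
  define t where "t = min (h1/2) ((R - y)/2)"
  have t1: "0 < t" using h1 y unfolding t_def by auto
  have t2: "t < h1" using h1(1) unfolding t_def by linarith
  have "t \<le> (R - y)/2" unfolding t_def by (rule min.cobounded2)
  hence t3: "y + t < R" using y by auto
  note t = t1 t2 t3
  have "w y < w (y+t)"
  proof (rule incr)
    fix x assume x: "x \<in> {y<..<y+t}"
    show "0 < w' x" using h1(2)[of "x - y"] x t assms(2) by auto
  qed (use t y in auto)
  moreover have "w (y+t) \<le> w y" using mx[of "y+t"] t y by auto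
  ultimately show False by simp
qed

lemma max_exists: obtains x0 where "x0 \<in> {-R<..<R}" "\<And>x. x \<in> {-R..R} \<Longrightarrow> w x \<le> w x0" "0 < w x0"
proof -
  obtain x0 where x0: "x0 \<in> {-R..R}" "\<And>y. y \<in> {-R..R} \<Longrightarrow> w y \<le> w x0"
    using continuous_attains_sup[OF compact_Icc _ cont] R by auto
  obtain x2 where x2: "x2 \<in> {-R..R}" "w x2 \<noteq> 0" using nz by auto
  have "0 < w x2" using nn[OF x2(1)] x2(2) by simp
  hence p: "0 < w x0" using x0(2)[OF x2(1)] by simp
  hence "x0 \<noteq> -R" "x0 \<noteq> R" using wl wr by auto
  hence "x0 \<in> {-R<..<R}" using x0(1) by auto
  thus ?thesis using that x0 p by blast
qed

lemma local_max_deriv: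
  assumes y: "y \<in> {-R<..<R}" and mx: "\<And>x. x \<in> {-R..R} \<Longrightarrow> w x \<le> w y"
  shows "w' y = 0"
proof (rule DERIV_local_max[OF D1[OF y], of "min (R - y) (y + R)"])
  show "0 < min (R - y) (y + R)" using y by auto
  show "\<forall>x. \<bar>y - x\<bar> < min (R - y) (y + R) \<longrightarrow> w x \<le> w y" using mx by (auto simp: abs_less_iff)
qed

lemma local_min_deriv:
  assumes y: "y \<in> {a<..<b}" and ab: "-R < a" "b < R" and mn: "\<And>x. x \<in> {a..b} \<Longrightarrow> w y \<le> w x"
  shows "w' y = 0"
proof (rule DERIV_local_min[OF D1, of y "min (b - y) (y - a)"])
  show "y \<in> {-R<..<R}" using y ab by auto
  show "0 < min (b - y) (y - a)" using y by auto
  show "\<forall>x. \<bar>y - x\<bar> < min (b - y) (y - a) \<longrightarrow> w y \<le> w x" using mn by (auto simp: abs_less_iff)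
qed

lemma pos: assumes x: "x \<in> {-R<..<R}" shows "0 < w x"
proof (rule ccontr)
  assume "\<not> 0 < w x"
  hence w0: "w x = 0" using nn[of x] x by auto
  have dx: "w' x = 0"
    by (rule DERIV_local_min[OF D1[OF x], of "min (R - x) (x + R)"]) (use x nn w0 in \<open>auto simp: abs_less_iff\<close>)
  obtain B where B: "0 \<le> B" "\<And>x. x \<in> {-R..R} \<Longrightarrow> \<bar>w x\<bar> \<le> B" using bounded_w by blast
  define K where "K = \<bar>c\<bar>/d + r*(1+B)/d"
  have "\<forall>y\<in>{-R<..<R}. w y = 0"
  proof (rule zero_unique[of "-R" x R w w' w'' "\<lambda>y. -c/d" "\<lambda>y. -r*(1-\<delta>-w y)/d" K])
    show "\<forall>y\<in>{-R<..<R}. \<bar>-c/d\<bar> \<le> K \<and> \<bar>-r*(1-\<delta>-w y)/d\<bar> \<le> K"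
    proof
      fix y assume y: "y \<in> {-R<..<R}"
      have "\<bar>1-\<delta>-w y\<bar> \<le> 1 + B" using B(2)[of y] y \<delta>0 \<delta>1 by auto
      hence "r * \<bar>1-\<delta>-w y\<bar> \<le> r*(1+B)" using r by (simp add: mult_left_mono)
      hence "\<bar>-r*(1-\<delta>-w y)/d\<bar> \<le> r*(1+B)/d" using d r by (simp add: abs_mult divide_right_mono)
      moreover have "0 \<le> r*(1+B)/d" "0 \<le> \<bar>c\<bar>/d" using d r B by auto
      ultimately show "\<bar>-c/d\<bar> \<le> K \<and> \<bar>-r*(1-\<delta>-w y)/d\<bar> \<le> K" unfolding K_def by linarith
    qed
  qed (use x D1 D2 w2 w0 dx in auto)
  moreover obtain x2 where x2: "x2 \<in> {-R..R}" "w x2 \<noteq> 0" using nz by auto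
  moreover have "x2 \<in> {-R<..<R}" using x2 wl wr by (cases "x2 = R"; cases "x2 = -R") auto
  ultimately show False by auto
qed


lemma below:
  assumes x0: "x0 \<in> {-R<..<R}" and mx: "\<And>x. x \<in> {-R..R} \<Longrightarrow> w x \<le> w x0"
  shows "w x0 < 1 - \<delta>"
proof -
  have d1: "w' x0 = 0" by (rule local_max_deriv[OF x0 mx])
  have d2: "w'' x0 \<le> 0" by (rule max_second[OF x0 d1 mx])
  have wp: "0 < w x0" by (rule pos[OF x0])
  have "0 \<le> d * (- w'' x0)" using d d2 by (intro mult_nonneg_nonneg) auto
  hence "r * w x0 * (1 - \<delta> - w x0) \<ge> 0" using ode[OF x0] d1 by simp
  moreover have "0 < r * w x0" using r wp by simp
  ultimately have ge: "1 - \<delta> - w x0 \<ge> 0" by (simp add: zero_le_mult_iff)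
  show ?thesis
  proof (rule ccontr)
    assume "\<not> w x0 < 1 - \<delta>"
    hence eq: "w x0 = 1 - \<delta>" using ge by simp
    obtain B where B: "0 \<le> B" "\<And>x. x \<in> {-R..R} \<Longrightarrow> \<bar>w x\<bar> \<le> B" using bounded_w by blast
    define K where "K = \<bar>c\<bar>/d + r*B/d"
    have U: "\<forall>y\<in>{-R<..<R}. (\<lambda>x. 1 - \<delta> - w x) y = 0"
    proof (rule zero_unique[of "-R" x0 R "\<lambda>x. 1 - \<delta> - w x" "\<lambda>x. - w' x" "\<lambda>x. - w'' x"
          "\<lambda>y. -c/d" "\<lambda>y. r * w y/d" K])
      show "\<forall>y\<in>{-R<..<R}. \<bar>-c/d\<bar> \<le> K \<and> \<bar>r * w y/d\<bar> \<le> K"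
      proof
        fix y assume y: "y \<in> {-R<..<R}"
        have "r * \<bar>w y\<bar> \<le> r*B" using B(2)[of y] y r by (simp add: mult_left_mono)
        hence "\<bar>r * w y/d\<bar> \<le> r*B/d" using d r by (simp add: abs_mult divide_right_mono)
        moreover have "0 \<le> r*B/d" "0 \<le> \<bar>c\<bar>/d" using d r B by auto
        ultimately show "\<bar>-c/d\<bar> \<le> K \<and> \<bar>r * w y/d\<bar> \<le> K" unfolding K_def by linarith
      qed
      show "\<forall>y\<in>{-R<..<R}. ((\<lambda>x. 1 - \<delta> - w x) has_real_derivative - w' y) (at y)"
        using D1 by (auto intro!: derivative_eq_intros)
      show "\<forall>y\<in>{-R<..<R}. ((\<lambda>x. - w' x) has_real_derivative - w'' y) (at y)"
        using D2 by (auto intro!: derivative_eq_intros)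
      show "\<forall>y\<in>{-R<..<R}. - w'' y = - c / d * - w' y + r * w y / d * (1 - \<delta> - w y)"
        using ode d by (auto simp: field_simps)
    qed (use x0 eq d1 in auto)
    have "\<exists>t\<ge>x0. t \<le> R \<and> w t = (1 - \<delta>)/2"
      by (rule IVT2') (use eq wr \<delta>1 x0 cont in \<open>auto intro: continuous_on_subset\<close>)
    then obtain t where t: "x0 \<le> t" "t \<le> R" "w t = (1 - \<delta>)/2" by blast
    have "t \<noteq> R" using t wr \<delta>1 by auto
    hence "t \<in> {-R<..<R}" using t x0 by auto
    hence "w t = 1 - \<delta>" using U by auto
    thus False using t(3) \<delta>1 by (simp add: field_simps)
  qed
qed


lemma lt_all: "x \<in> {-R..R} \<Longrightarrow> w x < 1 - \<delta>"
proof -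
  assume x: "x \<in> {-R..R}"
  obtain x0 where x0: "x0 \<in> {-R<..<R}" "\<And>x. x \<in> {-R..R} \<Longrightarrow> w x \<le> w x0" using max_exists by blast
  show ?thesis using below[OF x0] x0(2)[OF x] by simp
qed

lemma crit_neg: assumes y: "y \<in> {-R<..<R}" and "w' y = 0" shows "w'' y < 0"
proof -
  have "0 < r * w y * (1 - \<delta> - w y)" using pos[OF y] lt_all[of y] y r by auto
  hence "0 < d * (- w'' y)" using ode[OF y] assms(2) by simp
  thus ?thesis using d by (simp add: zero_less_mult_iff mult_less_0_iff)
qed

lemma dcont: "{a..b} \<subseteq> {-R<..<R} \<Longrightarrow> continuous_on {a..b} w'"
  by (rule continuous_at_imp_continuous_on) (use DERIV_isCont[OF D2] in blast)

lemma no_two: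
  assumes y1: "y1 \<in> {-R<..<R}" and y2: "y2 \<in> {-R<..<R}" and lt: "y1 < y2"
    and c1: "w' y1 = 0" and c2: "w' y2 = 0"
  shows False
proof -
  have "continuous_on {y1..y2} w" using cont by (rule continuous_on_subset) (use y1 y2 in auto)
  then obtain m where m: "m \<in> {y1..y2}" "\<And>x. x \<in> {y1..y2} \<Longrightarrow> w m \<le> w x"
    using continuous_attains_inf[OF compact_Icc] lt by (metis atLeastAtMost_iff empty_iff less_eq_real_def)
  obtain h1 where h1: "h1 > 0" "\<And>t. 0 < t \<Longrightarrow> t < h1 \<Longrightarrow> w (y1+t) < w y1 \<and> w (y1-t) < w y1"
    using crit_max[OF y1 c1 crit_neg[OF y1 c1]] by blast
  obtain h2 where h2: "h2 > 0" "\<And>t. 0 < t \<Longrightarrow> t < h2 \<Longrightarrow> w (y2+t) < w y2 \<and> w (y2-t) < w y2"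
    using crit_max[OF y2 c2 crit_neg[OF y2 c2]] by blast
  define t1 where "t1 = min (h1/2) ((y2-y1)/2)"
  have "t1 \<le> (y2-y1)/2" unfolding t1_def by (rule min.cobounded2)
  moreover have "t1 \<le> h1/2" unfolding t1_def by (rule min.cobounded1)
  moreover have "0 < t1" using h1 lt by (simp add: t1_def)
  ultimately have "w (y1+t1) < w y1" "y1 + t1 \<in> {y1..y2}" using h1 by auto
  hence "m \<noteq> y1" using m(2)[of "y1+t1"] by auto
  define t2 where "t2 = min (h2/2) ((y2-y1)/2)"
  have "t2 \<le> (y2-y1)/2" unfolding t2_def by (rule min.cobounded2)
  moreover have "t2 \<le> h2/2" unfolding t2_def by (rule min.cobounded1)
  moreover have "0 < t2" using h2 lt by (simp add: t2_def)
  ultimately have "w (y2-t2) < w y2" "y2 - t2 \<in> {y1..y2}" using h2 by auto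
  hence "m \<noteq> y2" using m(2)[of "y2-t2"] by auto
  have mI: "m \<in> {y1<..<y2}" using m(1) \<open>m \<noteq> y1\<close> \<open>m \<noteq> y2\<close> by auto
  have mI2: "m \<in> {-R<..<R}" using mI y1 y2 by auto
  have cm: "w' m = 0" by (rule local_min_deriv[OF mI _ _ m(2)]) (use y1 y2 in auto)
  obtain h3 where h3: "h3 > 0" "\<And>t. 0 < t \<Longrightarrow> t < h3 \<Longrightarrow> w (m+t) < w m \<and> w (m-t) < w m"
    using crit_max[OF mI2 cm crit_neg[OF mI2 cm]] by blast
  define t3 where "t3 = min (h3/2) ((y2-m)/2)"
  have "t3 \<le> (y2-m)/2" unfolding t3_def by (rule min.cobounded2)
  moreover have "t3 \<le> h3/2" unfolding t3_def by (rule min.cobounded1)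
  moreover have "0 < t3" using h3 mI by (simp add: t3_def)
  ultimately have "w (m+t3) < w m" "m + t3 \<in> {y1..y2}" using h3 mI by auto
  thus False using m(2)[of "m+t3"] by auto
qed

lemma unimodal:
  assumes x0: "x0 \<in> {-R<..<R}" and mx: "\<And>x. x \<in> {-R..R} \<Longrightarrow> w x \<le> w x0"
  shows "\<forall>z\<in>{-R<..<x0}. 0 < w' z" "\<forall>z\<in>{x0<..<R}. w' z < 0"
proof -
  have c0: "w' x0 = 0" by (rule local_max_deriv[OF x0 mx])
  have dI: "\<And>x. -R < x \<Longrightarrow> x < R \<Longrightarrow> w differentiable at x"
    using D1 by (meson greaterThanLessThan_iff real_differentiable_def)
  show "\<forall>z\<in>{-R<..<x0}. 0 < w' z"
  proof
    fix z assume z: "z \<in> {-R<..<x0}"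
    hence zI: "z \<in> {-R<..<R}" using x0 by auto
    show "0 < w' z"
    proof (rule ccontr)
      assume "\<not> 0 < w' z"
      hence nz: "w' z \<le> 0" by simp
      have "continuous_on {-R..z} w" using cont by (rule continuous_on_subset) (use zI in auto)
      then obtain l \<xi> where \<xi>: "-R < \<xi>" "\<xi> < z" "(w has_real_derivative l) (at \<xi>)" "w z - w (-R) = (z + R) * l"
        using MVT[of "-R" z w] zI dI by force
      have \<xi>I: "\<xi> \<in> {-R<..<R}" using \<xi> zI by auto
      have "l = w' \<xi>" using DERIV_unique[OF \<xi>(3) D1[OF \<xi>I]] .
      moreover have "0 < (z + R) * l" using \<xi>(4) pos[OF zI] wl by simp
      ultimately have lp: "0 < w' \<xi>" using zI by (simp add: zero_less_mult_iff)
      have "{\<xi>..z} \<subseteq> {-R<..<R}" using \<xi> zI by auto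
      hence "continuous_on {\<xi>..z} w'" by (rule dcont)
      hence "\<exists>t\<ge>\<xi>. t \<le> z \<and> w' t = 0"
        by (intro IVT2'[of w' z 0 \<xi>]) (use nz lp \<xi> in auto)
      then obtain t where t: "\<xi> \<le> t" "t \<le> z" "w' t = 0" by blast
      have tI: "t \<in> {-R<..<R}" using t \<xi> zI by auto
      show False by (rule no_two[OF tI x0 _ t(3) c0]) (use t z in auto)
    qed
  qed
  show "\<forall>z\<in>{x0<..<R}. w' z < 0"
  proof
    fix z assume z: "z \<in> {x0<..<R}"
    hence zI: "z \<in> {-R<..<R}" using x0 by auto
    show "w' z < 0"
    proof (rule ccontr)
      assume "\<not> w' z < 0"
      hence nz: "0 \<le> w' z" by simp
      have "continuous_on {z..R} w" using cont by (rule continuous_on_subset) (use zI in auto)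
      then obtain l \<xi> where \<xi>: "z < \<xi>" "\<xi> < R" "(w has_real_derivative l) (at \<xi>)" "w R - w z = (R - z) * l"
        using MVT[of z R w] zI dI by force
      have \<xi>I: "\<xi> \<in> {-R<..<R}" using \<xi> zI by auto
      have "l = w' \<xi>" using DERIV_unique[OF \<xi>(3) D1[OF \<xi>I]] .
      moreover have "(R - z) * l < 0" using \<xi>(4) pos[OF zI] wr by simp
      ultimately have lp: "w' \<xi> < 0" using zI by (simp add: mult_less_0_iff)
      have "{z..\<xi>} \<subseteq> {-R<..<R}" using \<xi> zI by auto
      hence "continuous_on {z..\<xi>} w'" by (rule dcont)
      hence "\<exists>t\<ge>z. t \<le> \<xi> \<and> w' t = 0"
        by (intro IVT2'[of w' \<xi> 0 z]) (use nz lp \<xi> in auto)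
      then obtain t where t: "z \<le> t" "t \<le> \<xi>" "w' t = 0" by blast
      have tI: "t \<in> {-R<..<R}" using t \<xi> zI by auto
      show False by (rule no_two[OF x0 tI _ c0 t(3)]) (use t z in auto)
    qed
  qed
qed


lemma angle_deriv:
  assumes x: "x \<in> {-R<..<R}"
  shows "((\<lambda>x. arctan (w' x * (1-\<delta>-w x)/w x)) has_real_derivative
     (w'' x*(1-\<delta>-w x)*w x - (w' x)^2*(1-\<delta>)) / ((w x)^2 + (w' x)^2*(1-\<delta>-w x)^2)) (at x)"
  using D1[OF x] D2[OF x] pos[OF x]
  apply (auto intro!: derivative_eq_intros)
  using alg_deriv[where W="w x" and U="1-\<delta>-w x" and Y="w' x" and Z="w'' x"] by simp

lemma angle_bound:
  assumes cc: "c^2 < 4*d*r*(1-\<delta>)" and \<delta>p: "0 < \<delta>" and small: "\<And>x. x \<in> {-R..R} \<Longrightarrow> w x < 1 - 2*\<delta>"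
  shows "R * ((d*(1-\<delta>)*r - (c/2)^2)/(d*(1-\<delta>)+r) * \<delta>^2 / d) < pi"
proof -
  define \<epsilon> where "\<epsilon> = (d*(1-\<delta>)*r - (c/2)^2)/(d*(1-\<delta>)+r) * \<delta>^2 / d"
  define f where "f x = arctan (w' x * (1-\<delta>-w x)/w x)" for x
  define D where "D x = (w'' x*(1-\<delta>-w x)*w x - (w' x)^2*(1-\<delta>)) / ((w x)^2 + (w' x)^2*(1-\<delta>-w x)^2)" for x
  have fD: "(f has_real_derivative D x) (at x)" if x: "x \<in> {-R<..<R}" for x
    unfolding f_def D_def by (rule angle_deriv[OF x])
  have Dle: "D x \<le> - \<epsilon>" if x: "x \<in> {-R<..<R}" for x
  proof -
    have wx: "0 < w x" "w x < 1 - 2*\<delta>" using pos[OF x] small[of x] x by auto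
    have "(w'' x*(1-\<delta>-w x)*w x - (w' x)^2*(1-\<delta>)) / ((w x)^2 + (w' x)^2*(1-\<delta>-w x)^2) \<le> -\<epsilon>"
      unfolding \<epsilon>_def
      by (rule rate_ineq[OF d r \<delta>p \<delta>1 cc wx(1)]) (use wx \<delta>0 ode[OF x] in \<open>auto simp: algebra_simps\<close>)
    thus ?thesis by (simp add: D_def)
  qed
  obtain \<xi> where \<xi>: "-R/2 < \<xi>" "\<xi> < R/2" "f (R/2) - f (-R/2) = (R/2 - -R/2) * D \<xi>"
    using MVT2[of "-R/2" "R/2" f D] fD R by force
  have "D \<xi> \<le> -\<epsilon>" by (rule Dle) (use \<xi> R in auto)
  hence "R * D \<xi> \<le> R * (-\<epsilon>)" using R by (intro mult_left_mono) auto
  hence "f (R/2) - f (-R/2) \<le> R * (-\<epsilon>)" using \<xi>(3) by simp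
  moreover have "-pi < f (R/2) - f (-R/2)"
    using arctan_bounded[of "w' (R/2) * (1-\<delta>-w (R/2))/w (R/2)"]
          arctan_bounded[of "w' (-R/2) * (1-\<delta>-w (-R/2))/w (-R/2)"] unfolding f_def by linarith
  ultimately show ?thesis unfolding \<epsilon>_def[symmetric] by linarith
qed

lemma no_sol:
  assumes cc: "4*d*r*(1-\<delta>) \<le> c^2"
  shows False
proof -
  define a where "a = c/(2*d)"
  define v where "v x = exp (a*x) * w x" for x
  define V1 where "V1 x = exp (a*x) * (a*w x + w' x)" for x
  define V2 where "V2 x = exp (a*x) * (a*(a*w x + w' x) + (a*w' x + w'' x))" for x
  have dv: "(v has_real_derivative V1 x) (at x)" if x: "x \<in> {-R<..<R}" for x
    unfolding v_def V1_def using D1[OF x] by (auto intro!: derivative_eq_intros simp: algebra_simps)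
  have dv1: "(V1 has_real_derivative V2 x) (at x)" if x: "x \<in> {-R<..<R}" for x
    unfolding V1_def V2_def using D1[OF x] D2[OF x] by (auto intro!: derivative_eq_intros simp: algebra_simps)
  have V2p: "0 \<le> V2 x" if x: "x \<in> {-R<..<R}" for x
  proof -
    have e: "d * (a*(a*w x + w' x) + (a*w' x + w'' x)) = w x * (c^2/(4*d) - r*(1-\<delta>) + r * w x)"
    proof -
      have "d * (a*(a*w x + w' x) + (a*w' x + w'' x)) = d*a^2*w x + (2*d*a)*w' x + d*w'' x"
        by (simp add: algebra_simps power2_eq_square)
      also have "2*d*a = c" using d by (simp add: a_def)
      also have "d*a^2 = c^2/(4*d)" using d by (simp add: a_def power2_eq_square field_simps)
      also have "d*w'' x = - c*w' x - r * w x * (1 - \<delta> - w x)" using ode[OF x] by linarith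
      finally show ?thesis by (simp add: algebra_simps)
    qed
    have "c^2/(4*d) - r*(1-\<delta>) \<ge> 0" using cc d by (simp add: field_simps)
    hence "0 \<le> w x * (c^2/(4*d) - r*(1-\<delta>) + r * w x)" using pos[OF x] r by simp
    hence "0 \<le> d * (a*(a*w x + w' x) + (a*w' x + w'' x))" using e by simp
    hence "0 \<le> a*(a*w x + w' x) + (a*w' x + w'' x)" using d by (simp add: zero_le_mult_iff)
    thus ?thesis by (simp add: V2_def)
  qed
  have vc: "continuous_on {-R..R} v" unfolding v_def by (intro continuous_intros cont)
  obtain m where m: "m \<in> {-R..R}" "\<And>y. y \<in> {-R..R} \<Longrightarrow> v y \<le> v m"
    using continuous_attains_sup[OF compact_Icc _ vc] R by auto
  obtain x0 where x0: "x0 \<in> {-R<..<R}" "0 < w x0" using max_exists by metis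
  have "0 < v x0" using x0 by (simp add: v_def)
  hence vm: "0 < v m" using m(2)[of x0] x0 by auto
  hence "m \<noteq> R" "m \<noteq> -R" using wl wr by (auto simp: v_def)
  hence mI: "m \<in> {-R<..<R}" using m(1) by auto
  have V10: "V1 m = 0"
  proof (rule DERIV_local_max[OF dv[OF mI], of "min (R - m) (m + R)"])
    show "0 < min (R - m) (m + R)" using mI by auto
    show "\<forall>y. \<bar>m - y\<bar> < min (R - m) (m + R) \<longrightarrow> v y \<le> v m" using m(2) by (auto simp: abs_less_iff)
  qed
  have V1nn: "0 \<le> V1 t" if t: "t \<in> {m<..<R}" for t
  proof -
    have "V1 m \<le> V1 t"
    proof (rule DERIV_nonneg_imp_nondecreasing[of m t V1])
      show "m \<le> t" using t by simp
      fix x assume "m \<le> x" "x \<le> t"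
      hence xI: "x \<in> {-R<..<R}" using t mI by auto
      show "\<exists>y. (V1 has_real_derivative y) (at x) \<and> 0 \<le> y" using dv1[OF xI] V2p[OF xI] by blast
    qed
    thus ?thesis using V10 by simp
  qed
  have "continuous_on {m..R} v" using vc by (rule continuous_on_subset) (use mI in auto)
  moreover have "\<And>x. m < x \<Longrightarrow> x < R \<Longrightarrow> v differentiable at x"
    using dv mI by (meson greaterThanLessThan_iff less_trans real_differentiable_def)
  ultimately obtain l \<xi> where \<xi>: "m < \<xi>" "\<xi> < R" "(v has_real_derivative l) (at \<xi>)" "v R - v m = (R - m) * l"
    using MVT[of m R v] mI by auto
  have "l = V1 \<xi>" using DERIV_unique[OF \<xi>(3) dv] \<xi> mI by auto
  hence "0 \<le> (R - m) * l" using V1nn[of \<xi>] \<xi> by simp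
  moreover have "v R = 0" using wr by (simp add: v_def)
  ultimately show False using \<xi>(4) vm by linarith
qed

lemma sup_eq:
  assumes x0: "x0 \<in> {-R<..<R}" and mx: "\<And>x. x \<in> {-R..R} \<Longrightarrow> w x \<le> w x0"
  shows "(SUP x\<in>{-R..R}. w x) = w x0"
  by (rule cSup_eq_maximum) (use x0 mx in auto)

lemma part1: "(SUP x\<in>{-R..R}. w x) < 1 - \<delta>"
proof -
  obtain x0 where x0: "x0 \<in> {-R<..<R}" "\<And>x. x \<in> {-R..R} \<Longrightarrow> w x \<le> w x0" using max_exists by blast
  show ?thesis using sup_eq[OF x0] below[OF x0] by simp
qed

lemma part_uni:
  "\<exists>!x\<^sub>0. x\<^sub>0 \<in> {-R<..<R} \<and>
                strict_mono_on {-R..x\<^sub>0} w \<and>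
                (\<forall>a\<in>{x\<^sub>0..R}. \<forall>b\<in>{x\<^sub>0..R}. a < b \<longrightarrow> w b < w a) \<and>
                w x\<^sub>0 = (SUP x\<in>{-R..R}. w x)"
proof -
  obtain x0 where x0: "x0 \<in> {-R<..<R}" "\<And>x. x \<in> {-R..R} \<Longrightarrow> w x \<le> w x0" using max_exists by blast
  note U = unimodal[OF x0]
  have sm: "strict_mono_on {-R..x0} w"
  proof (rule strict_mono_onI)
    fix a b assume ab: "a \<in> {-R..x0}" "b \<in> {-R..x0}" "a < b"
    show "w a < w b" by (rule incr) (use ab x0 U(1) in auto)
  qed
  have dc: "\<forall>a\<in>{x0..R}. \<forall>b\<in>{x0..R}. a < b \<longrightarrow> w b < w a"
  proof (intro ballI impI)
    fix a b assume ab: "a \<in> {x0..R}" "b \<in> {x0..R}" "a < b"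
    show "w b < w a" by (rule decr) (use ab x0 U(2) in auto)
  qed
  have se: "w x0 = (SUP x\<in>{-R..R}. w x)" using sup_eq[OF x0] by simp
  show ?thesis
  proof (rule ex1I[of _ x0])
    show "x0 \<in> {-R<..<R} \<and> strict_mono_on {-R..x0} w \<and>
      (\<forall>a\<in>{x0..R}. \<forall>b\<in>{x0..R}. a < b \<longrightarrow> w b < w a) \<and> w x0 = (SUP x\<in>{-R..R}. w x)"
      using x0 sm dc se by blast
  next
    fix y assume y: "y \<in> {-R<..<R} \<and> strict_mono_on {-R..y} w \<and>
      (\<forall>a\<in>{y..R}. \<forall>b\<in>{y..R}. a < b \<longrightarrow> w b < w a) \<and> w y = (SUP x\<in>{-R..R}. w x)"
    show "y = x0"
    proof (rule ccontr)
      assume ne: "y \<noteq> x0"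
      show False
      proof (cases "y < x0")
        case True
        have yd: "\<forall>a\<in>{y..R}. \<forall>b\<in>{y..R}. a < b \<longrightarrow> w b < w a" using y by blast
        have "w x0 < w y" using yd[rule_format, of y x0] True x0(1) y by auto
        thus False using y se by simp
      next
        case False
        hence "x0 < y" using ne by simp
        hence "w y < w x0" using dc[rule_format, of x0 y] y x0(1) by auto
        thus False using y se by simp
      qed
    qed
  qed
qed

end

lemma R_pos:
  assumes "omega_sol d r \<delta> R w" shows "0 < R"
proof (rule ccontr)
  assume "\<not> 0 < R"
  moreover obtain x where "x \<in> {-R..R}" "w x \<noteq> 0" using assms unfolding omega_sol_def by blast
  moreover have "w R = 0" using assms unfolding omega_sol_def bvp_solution_def by blast
  ultimately have "x \<le> R" "R \<le> x" "w R = 0" "w x \<noteq> 0" by auto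
  thus False by (metis order_antisym)
qed

lemma get_sol:
  assumes "0 < d" "0 < r" "0 \<le> \<delta>" "\<delta> < 1" and S: "omega_sol d r \<delta> R w"
  obtains w' w'' where "sol d r \<delta> R (2 * sqrt (r * (1 - \<delta>) * d) - \<delta>) w w' w''"
proof -
  from S obtain w' w'' where W: "\<forall>x\<in>{-R<..<R}.
        (w has_real_derivative w' x) (at x) \<and>
        (w' has_real_derivative w'' x) (at x) \<and>
        - d * w'' x - (2 * sqrt (r * (1 - \<delta>) * d) - \<delta>) * w' x
          = r * w x * (1 - \<delta> - w x)"
    unfolding omega_sol_def bvp_solution_def by blast
  have "sol d r \<delta> R (2 * sqrt (r * (1 - \<delta>) * d) - \<delta>) w w' w''"
    using assms R_pos[OF S] W unfolding omega_sol_def bvp_solution_def by unfold_locales auto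
  thus ?thesis using that by blast
qed

theorem lemma4p3:
  fixes d r \<delta> :: real
  assumes "0 < d" and "0 < r" and "0 \<le> \<delta>" and "\<delta> < 1"
  shows "(\<forall>R w. 0 < R \<and> omega_sol d r \<delta> R w \<longrightarrow> (SUP x\<in>{-R..R}. w x) < 1 - \<delta>)
    \<and> (0 < \<delta> \<longrightarrow>
        (\<exists>R\<^sub>\<delta>. omega_threshold d r \<delta> \<le> R\<^sub>\<delta> \<and>
          (\<forall>R w. R\<^sub>\<delta> \<le> R \<and> omega_sol d r \<delta> R w \<longrightarrow>
             (SUP x\<in>{-R..R}. w x) \<ge> 1 - 2 * \<delta> \<and>
             (\<exists>!x\<^sub>0. x\<^sub>0 \<in> {-R<..<R} \<and>
                strict_mono_on {-R..x\<^sub>0} w \<and>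
                (\<forall>a\<in>{x\<^sub>0..R}. \<forall>b\<in>{x\<^sub>0..R}. a < b \<longrightarrow> w b < w a) \<and>
                w x\<^sub>0 = (SUP x\<in>{-R..R}. w x)))))"
proof -
  define c where "c = 2 * sqrt (r * (1 - \<delta>) * d) - \<delta>"
  have P1: "\<forall>R w. 0 < R \<and> omega_sol d r \<delta> R w \<longrightarrow> (SUP x\<in>{-R..R}. w x) < 1 - \<delta>"
  proof (intro allI impI)
    fix R w assume H: "0 < R \<and> omega_sol d r \<delta> R w"
    then obtain w' w'' where S: "sol d r \<delta> R c w w' w''"
      using get_sol[OF assms] unfolding c_def by blast
    show "(SUP x\<in>{-R..R}. w x) < 1 - \<delta>" by (rule sol.part1[OF S])
  qed
  have P2: "0 < \<delta> \<longrightarrow>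
        (\<exists>R\<^sub>\<delta>. omega_threshold d r \<delta> \<le> R\<^sub>\<delta> \<and>
          (\<forall>R w. R\<^sub>\<delta> \<le> R \<and> omega_sol d r \<delta> R w \<longrightarrow>
             (SUP x\<in>{-R..R}. w x) \<ge> 1 - 2 * \<delta> \<and>
             (\<exists>!x\<^sub>0. x\<^sub>0 \<in> {-R<..<R} \<and>
                strict_mono_on {-R..x\<^sub>0} w \<and>
                (\<forall>a\<in>{x\<^sub>0..R}. \<forall>b\<in>{x\<^sub>0..R}. a < b \<longrightarrow> w b < w a) \<and>
                w x\<^sub>0 = (SUP x\<in>{-R..R}. w x))))"
  proof
    assume \<delta>p: "0 < \<delta>"
    show "\<exists>R\<^sub>\<delta>. omega_threshold d r \<delta> \<le> R\<^sub>\<delta> \<and>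
          (\<forall>R w. R\<^sub>\<delta> \<le> R \<and> omega_sol d r \<delta> R w \<longrightarrow>
             (SUP x\<in>{-R..R}. w x) \<ge> 1 - 2 * \<delta> \<and>
             (\<exists>!x\<^sub>0. x\<^sub>0 \<in> {-R<..<R} \<and>
                strict_mono_on {-R..x\<^sub>0} w \<and>
                (\<forall>a\<in>{x\<^sub>0..R}. \<forall>b\<in>{x\<^sub>0..R}. a < b \<longrightarrow> w b < w a) \<and>
                w x\<^sub>0 = (SUP x\<in>{-R..R}. w x)))"
    proof (cases "c^2 < 4*d*r*(1-\<delta>)")
      case True
      define \<epsilon> where "\<epsilon> = (d*(1-\<delta>)*r - (c/2)^2)/(d*(1-\<delta>)+r) * \<delta>^2 / d"
      have "(c/2)^2 < d*(1-\<delta>)*r" using True by (simp add: power_divide algebra_simps)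
      hence "0 < d*(1-\<delta>)*r - (c/2)^2" by simp
      moreover have "0 < d*(1-\<delta>)+r" using assms by (simp add: add_pos_pos)
      ultimately have \<epsilon>p: "0 < \<epsilon>" unfolding \<epsilon>_def using assms \<delta>p by simp
      show ?thesis
      proof (rule exI[of _ "max (omega_threshold d r \<delta>) (pi/\<epsilon>)"], intro conjI allI impI)
        show "omega_threshold d r \<delta> \<le> max (omega_threshold d r \<delta>) (pi/\<epsilon>)" by simp
        fix R w assume H: "max (omega_threshold d r \<delta>) (pi/\<epsilon>) \<le> R \<and> omega_sol d r \<delta> R w"
        then obtain w' w'' where S: "sol d r \<delta> R c w w' w''"
          using get_sol[OF assms] unfolding c_def by blast
        have "pi/\<epsilon> \<le> R" using H by simp
        hence Rge: "pi \<le> R * \<epsilon>" using \<epsilon>p by (simp add: divide_le_eq)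
        show "(SUP x\<in>{-R..R}. w x) \<ge> 1 - 2 * \<delta>"
        proof (rule ccontr)
          assume nb: "\<not> (SUP x\<in>{-R..R}. w x) \<ge> 1 - 2 * \<delta>"
          obtain x0 where x0: "x0 \<in> {-R<..<R}" "\<And>x. x \<in> {-R..R} \<Longrightarrow> w x \<le> w x0"
            using sol.max_exists[OF S] by blast
          have "w x0 < 1 - 2*\<delta>" using nb sol.sup_eq[OF S x0] by simp
          hence "\<And>x. x \<in> {-R..R} \<Longrightarrow> w x < 1 - 2*\<delta>" using x0(2) by fastforce
          from sol.angle_bound[OF S True \<delta>p this] have "R * \<epsilon> < pi" unfolding \<epsilon>_def .
          thus False using Rge by simp
        qed
        show "\<exists>!x\<^sub>0. x\<^sub>0 \<in> {-R<..<R} \<and>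
                strict_mono_on {-R..x\<^sub>0} w \<and>
                (\<forall>a\<in>{x\<^sub>0..R}. \<forall>b\<in>{x\<^sub>0..R}. a < b \<longrightarrow> w b < w a) \<and>
                w x\<^sub>0 = (SUP x\<in>{-R..R}. w x)"
          by (rule sol.part_uni[OF S])
      qed
    next
      case False
      show ?thesis
      proof (rule exI[of _ "omega_threshold d r \<delta>"], intro conjI allI impI)
        show "omega_threshold d r \<delta> \<le> omega_threshold d r \<delta>" by simp
        fix R w assume H: "omega_threshold d r \<delta> \<le> R \<and> omega_sol d r \<delta> R w"
        then obtain w' w'' where S: "sol d r \<delta> R c w w' w''"
          using get_sol[OF assms] unfolding c_def by blast
        have "4*d*r*(1-\<delta>) \<le> c^2" using False by simp
        hence "False" by (rule sol.no_sol[OF S])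
        thus "(SUP x\<in>{-R..R}. w x) \<ge> 1 - 2 * \<delta>" "\<exists>!x\<^sub>0. x\<^sub>0 \<in> {-R<..<R} \<and>
                strict_mono_on {-R..x\<^sub>0} w \<and>
                (\<forall>a\<in>{x\<^sub>0..R}. \<forall>b\<in>{x\<^sub>0..R}. a < b \<longrightarrow> w b < w a) \<and>
                w x\<^sub>0 = (SUP x\<in>{-R..R}. w x)" by blast+
      qed
    qed
  qed
  show ?thesis using P1 P2 by blast
qed

end
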